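(* Let $\ell>0$ and let $\tilde X$ be distributed as $X\sim N(0,1)$ conditioned on $X>\ell$. Then $\Pr[|\tilde X|>t]\le2\exp(-t^2/K_1^2)$ for every $t>0$, where $K_1=\max\{\sqrt{20},|\ell|\sqrt{10}\}$. *)

theory Defs
  imports "HOL-Probability.Probability"
begin

end

theory Submission
  imports Defs
begin

lemma exp_tenth_le2: "exp (1/10::real) \<le> 2"
proof (rule ccontr)
  assume "\<not> ?thesis"
  hence "(2::real)^10 < exp (1/10) ^ 10"
    by (intro power_strict_mono) auto
  also have "exp (1/10::real) ^ 10 = exp 1"
    by (simp add: exp_of_nat_mult[symmetric])
  also have "\<dots> \<le> 3" by (rule exp_le)
  finally show False by simp
qed

lemma tail_shift:
  fixes l t :: real
  assumes "0 \<le> l" "l \<le> t"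
  shows "(\<integral>\<^sup>+x. ennreal (std_normal_density x) * indicator {t<..} x \<partial>lborel)
     \<le> ennreal (exp (-(t\<^sup>2 - l\<^sup>2)/2)) * (\<integral>\<^sup>+x. ennreal (std_normal_density x) * indicator {l<..} x \<partial>lborel)"
proof -
  define d where "d = t - l"
  have d: "d \<ge> 0" using assms d_def by simp
  have "(\<integral>\<^sup>+x. ennreal (std_normal_density x) * indicator {t<..} x \<partial>lborel)
      = (\<integral>\<^sup>+x. ennreal (std_normal_density (d + x)) * indicator {t<..} (d + x) \<partial>lborel)"
    using nn_integral_real_affine[of "\<lambda>x. ennreal (std_normal_density x) * indicator {t<..} x" 1 d]
    by simp
  also have "\<dots> = (\<integral>\<^sup>+x. ennreal (std_normal_density (d + x)) * indicator {l<..} x \<partial>lborel)"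
    by (auto intro!: nn_integral_cong simp: indicator_def d_def)
  also have "\<dots> \<le> (\<integral>\<^sup>+x. ennreal (exp (-(t\<^sup>2 - l\<^sup>2)/2)) * (ennreal (std_normal_density x) * indicator {l<..} x) \<partial>lborel)"
  proof (intro nn_integral_mono)
    fix x :: real
    show "ennreal (std_normal_density (d + x)) * indicator {l<..} x
        \<le> ennreal (exp (-(t\<^sup>2 - l\<^sup>2)/2)) * (ennreal (std_normal_density x) * indicator {l<..} x)"
    proof (cases "l < x")
      case True
      have eq: "std_normal_density (d + x) = std_normal_density x * exp (- x * d - d\<^sup>2/2)"
      proof -
        have "- (d + x)\<^sup>2 / 2 = - x\<^sup>2 / 2 + (- x * d - d\<^sup>2/2)"
          by (simp add: power2_eq_square field_simps)
        hence "exp (- (d + x)\<^sup>2 / 2) = exp (- x\<^sup>2 / 2) * exp (- x * d - d\<^sup>2/2)"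
          by (simp only: exp_add)
        thus ?thesis by (simp only: std_normal_density_def mult.assoc)
      qed
      have "- x * d - d\<^sup>2/2 \<le> -(t\<^sup>2 - l\<^sup>2)/2"
      proof -
        have "l * d \<le> x * d" using True d by (intro mult_right_mono) auto
        moreover have "t\<^sup>2 - l\<^sup>2 = 2 * l * d + d\<^sup>2" by (simp add: d_def power2_eq_square algebra_simps)
        ultimately show ?thesis by simp
      qed
      hence "exp (- x * d - d\<^sup>2/2) \<le> exp (-(t\<^sup>2 - l\<^sup>2)/2)" by simp
      hence "std_normal_density (d + x) \<le> exp (-(t\<^sup>2 - l\<^sup>2)/2) * std_normal_density x"
        unfolding eq by (simp add: mult.commute mult_left_mono normal_density_nonneg)
      then show ?thesis using True
        by (simp add: ennreal_mult[symmetric] normal_density_nonneg ennreal_leI)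
    qed simp
  qed
  also have "\<dots> = ennreal (exp (-(t\<^sup>2 - l\<^sup>2)/2)) * (\<integral>\<^sup>+x. ennreal (std_normal_density x) * indicator {l<..} x \<partial>lborel)"
    by (rule nn_integral_cmult) auto
  finally show ?thesis .
qed

theorem lemma17:
  fixes M :: "'a measure" and X :: "'a \<Rightarrow> real" and l t :: real
  assumes "prob_space M"
    and "distributed M lborel X std_normal_density"
    and "l > 0"
    and "t > 0"
  shows "cond_prob M (\<lambda>\<omega>. \<bar>X \<omega>\<bar> > t) (\<lambda>\<omega>. X \<omega> > l)
           \<le> 2 * exp (- t\<^sup>2 / (max (sqrt 20) (\<bar>l\<bar> * sqrt 10))\<^sup>2)"
proof -
  interpret prob_space M by fact
  define K where "K = max (sqrt 20) (\<bar>l\<bar> * sqrt 10)"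
  have K2: "K\<^sup>2 \<ge> 20" "K\<^sup>2 \<ge> 10 * l\<^sup>2"
  proof -
    have "K \<ge> sqrt 20" "K \<ge> \<bar>l\<bar> * sqrt 10" by (auto simp: K_def)
    hence "K\<^sup>2 \<ge> (sqrt 20)\<^sup>2" "K\<^sup>2 \<ge> (\<bar>l\<bar> * sqrt 10)\<^sup>2"
      by (intro power_mono; simp)+
    thus "K\<^sup>2 \<ge> 20" "K\<^sup>2 \<ge> 10 * l\<^sup>2" by (simp_all add: power_mult_distrib)
  qed
  have Kpos: "K\<^sup>2 > 0" using K2(1) by linarith
  have Xm: "X \<in> measurable M lborel" using assms(2) by (rule distributed_measurable)
  have distr_eq: "distr M lborel X = density lborel (\<lambda>x. ennreal (std_normal_density x))"
    using assms(2) by (rule distributed_distr_eq_density)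
  have em: "emeasure M {\<omega> \<in> space M. X \<omega> > a}
      = (\<integral>\<^sup>+x. ennreal (std_normal_density x) * indicator {a<..} x \<partial>lborel)" for a
  proof -
    have "{\<omega> \<in> space M. X \<omega> > a} = X -` {a<..} \<inter> space M" by auto
    hence "emeasure M {\<omega> \<in> space M. X \<omega> > a} = emeasure (distr M lborel X) {a<..}"
      using Xm by (simp add: emeasure_distr)
    also have "\<dots> = (\<integral>\<^sup>+x. ennreal (std_normal_density x) * indicator {a<..} x \<partial>lborel)"
      unfolding distr_eq by (simp add: emeasure_density)
    finally show ?thesis .
  qed
  define N where "N = prob {\<omega> \<in> space M. \<bar>X \<omega>\<bar> > t \<and> X \<omega> > l}"
  define D where "D = prob {\<omega> \<in> space M. X \<omega> > l}"
  have cp: "cond_prob M (\<lambda>\<omega>. \<bar>X \<omega>\<bar> > t) (\<lambda>\<omega>. X \<omega> > l) = N / D"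
    by (simp add: cond_prob_def N_def D_def)
  have D0: "D \<ge> 0" "N \<ge> 0" by (simp_all add: D_def N_def)
  have e2: "exp (1/10::real) \<le> 2" by (rule exp_tenth_le2)
  show ?thesis
  proof (cases "t \<le> l")
    case True
    have "N \<le> D" unfolding N_def D_def
      using Xm by (intro finite_measure_mono) auto
    hence r: "N / D \<le> 1" using D0 by (cases "D = 0") auto
    have "t\<^sup>2 / K\<^sup>2 \<le> 1/10"
    proof -
      have "t\<^sup>2 \<le> l\<^sup>2" using True assms by (intro power_mono) auto
      hence "10 * t\<^sup>2 \<le> K\<^sup>2" using K2 by simp
      thus ?thesis using Kpos by (simp add: divide_simps)
    qed
    hence "exp (-1/10) \<le> exp (- t\<^sup>2 / K\<^sup>2)" by simp
    moreover have "1 \<le> 2 * exp (-1/10::real)"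
      using e2 by (simp add: exp_minus divide_simps)
    ultimately show ?thesis using r cp unfolding K_def[symmetric] by linarith
  next
    case False
    have Neq: "{\<omega> \<in> space M. \<bar>X \<omega>\<bar> > t \<and> X \<omega> > l} = {\<omega> \<in> space M. X \<omega> > t}"
      using False assms by auto
    have "ennreal N \<le> ennreal (exp (-(t\<^sup>2 - l\<^sup>2)/2)) * ennreal D"
      using tail_shift[of l t] False assms
      unfolding N_def D_def Neq by (simp add: emeasure_eq_measure[symmetric] em)
    hence Nle: "N \<le> exp (-(t\<^sup>2 - l\<^sup>2)/2) * D"
      using D0 by (simp add: ennreal_mult[symmetric])
    have r: "N / D \<le> exp (-(t\<^sup>2 - l\<^sup>2)/2)"
      using Nle D0 by (cases "D = 0") (auto simp: divide_simps mult.commute)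
    have "-(t\<^sup>2 - l\<^sup>2)/2 \<le> 1/10 + (- t\<^sup>2 / K\<^sup>2)"
    proof -
      have tl: "t\<^sup>2 - l\<^sup>2 \<ge> 0" using False assms by (simp add: power_mono)
      have a: "l\<^sup>2 / K\<^sup>2 \<le> 1/10" using K2 Kpos by (simp add: divide_simps)
      have b: "(t\<^sup>2 - l\<^sup>2) / K\<^sup>2 \<le> (t\<^sup>2 - l\<^sup>2) / 2"
        using K2 tl by (intro divide_left_mono) auto
      have "t\<^sup>2 / K\<^sup>2 = l\<^sup>2 / K\<^sup>2 + (t\<^sup>2 - l\<^sup>2) / K\<^sup>2" by (simp add: diff_divide_distrib)
      thus ?thesis using a b by simp
    qed
    hence "exp (-(t\<^sup>2 - l\<^sup>2)/2) \<le> exp (1/10) * exp (- t\<^sup>2 / K\<^sup>2)"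
      by (simp add: exp_add[symmetric])
    also have "\<dots> \<le> 2 * exp (- t\<^sup>2 / K\<^sup>2)" using e2 by simp
    finally show ?thesis using r cp unfolding K_def[symmetric] by linarith
  qed
qed

end
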